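(* Let $D$ be the minimal Dress ring of $\mathbb{R}(X)$. Then $$D=\{\, f/\gamma \;:\; f\in\mathbb{R}[X],\ \gamma\in\Gamma,\ \deg f\le \deg\gamma\,\}.$$
   Context: $D$ denotes the minimal Dress ring of the field $\mathbb{R}(X)$, i.e. the subring of $\mathbb{R}(X)$ generated by $\mathbb{Z}$ and all elements $1/(1+h^2)$ with $h\in\mathbb{R}(X)$. $\Gamma$ denotes the set of polynomials in $\mathbb{R}[X]$ having no real root, i.e. the polynomials of the form $\alpha\prod_i\gamma_i$ with $0\neq\alpha\in\mathbb{R}$ and each $\gamma_i$ a monic degree-two polynomial irreducible over $\mathbb{R}$ (nonzero constants included). *)

theory Defs
  imports "HOL-Computational_Algebra.Polynomial" "HOL-Computational_Algebra.Fraction_Field"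
begin

type_synonym ratfun = "real poly fract"

inductive_set min_dress_ring :: "ratfun set" where
  int_in: "of_int n \<in> min_dress_ring"
| gen_in: "1 / (1 + h ^ 2) \<in> min_dress_ring"
| add_in: "a \<in> min_dress_ring \<Longrightarrow> b \<in> min_dress_ring \<Longrightarrow> a + b \<in> min_dress_ring"
| neg_in: "a \<in> min_dress_ring \<Longrightarrow> - a \<in> min_dress_ring"
| mult_in: "a \<in> min_dress_ring \<Longrightarrow> b \<in> min_dress_ring \<Longrightarrow> a * b \<in> min_dress_ring"

definition Gamma :: "real poly set" where
  "Gamma = {p. p \<noteq> 0 \<and> (\<forall>x::real. poly p x \<noteq> 0)}"

end

theory Submission
  imports Defs "HOL-Computational_Algebra.Fundamental_Theorem_Algebra" "HOL-Computational_Algebra.Polynomial_Factorial" "HOL-Computational_Algebra.Field_as_Ring"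
begin

abbreviation D where "D \<equiv> min_dress_ring"

definition E :: "real poly \<Rightarrow> ratfun" where "E p = Fract p 1"
definition C :: "real \<Rightarrow> ratfun" where "C c = E [:c:]"

lemma E_add: "E (p + q) = E p + E q" by (simp add: E_def)
lemma E_mult: "E (p * q) = E p * E q" by (simp add: E_def)
lemma E_diff: "E (p - q) = E p - E q" by (simp add: E_def)
lemma E_1: "E 1 = 1" by (simp add: E_def fract_collapse)
lemma E_0: "E 0 = 0" by (simp add: E_def fract_collapse)
lemma E_eq_0: "E p = 0 \<longleftrightarrow> p = 0"
  by (simp add: E_def Zero_fract_def eq_fract)
lemma Fract_E: "g \<noteq> 0 \<Longrightarrow> Fract f g = E f / E g"
  by (simp add: E_def)
lemma C_add: "C (a + b) = C a + C b" by (simp add: C_def E_def)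
lemma C_mult: "C (a * b) = C a * C b" by (simp add: C_def E_def mult.commute)
lemma C_1: "C 1 = 1" by (metis C_def E_1 pCons_one)
lemma C_0: "C 0 = 0" by (simp add: C_def E_def fract_collapse)
lemma C_eq_0: "C a = 0 \<longleftrightarrow> a = 0" by (simp add: C_def E_eq_0)
lemma C_inv: "C (1/a) = 1 / C a"
proof (cases "a = 0")
  case True thus ?thesis by (simp add: C_0)
next
  case False
  have "C (1/a) * C a = 1" using False by (simp flip: C_mult add: C_1)
  thus ?thesis using False by (simp add: C_eq_0 field_simps)
qed
lemma C_of_int: "C (of_int n) = of_int n"
proof -
  have "(of_int n :: ratfun) = Fract (of_int n) 1"
  proof (cases n)
    case (nonneg m) thus ?thesis by (simp add: of_nat_fract)
  next
    case (neg m)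
    have "(of_int n :: ratfun) = - of_nat (Suc m)" using neg by simp
    also have "\<dots> = Fract (- of_nat (Suc m)) 1" by (simp add: of_nat_fract)
    also have "(- of_nat (Suc m) :: real poly) = of_int n" using neg by simp
    finally show ?thesis .
  qed
  thus ?thesis by (simp add: C_def E_def of_int_poly)
qed
lemma E_smult: "E (smult c p) = C c * E p"
  by (simp add: C_def flip: E_mult)

lemma D_1: "1 \<in> D" using min_dress_ring.int_in[of 1] by simp
lemma D_0: "0 \<in> D" using min_dress_ring.int_in[of 0] by simp
lemma D_diff: "a \<in> D \<Longrightarrow> b \<in> D \<Longrightarrow> a - b \<in> D"
  using min_dress_ring.add_in min_dress_ring.neg_in by (metis diff_conv_add_uminus)

lemma D_gen: "1 / (1 + h ^ 2) \<in> D" by (rule min_dress_ring.gen_in)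

lemma D_C_unit: assumes "0 < c" "c \<le> 1" shows "C c \<in> D"
proof -
  define t where "t = sqrt (1/c - 1)"
  have "t ^ 2 = 1/c - 1" unfolding t_def using assms by simp
  have "1 + C t ^ 2 = C (1 + t^2)" by (simp add: C_add C_mult C_1 power2_eq_square)
  hence "1 + C t ^ 2 = C (1/c)" using \<open>t ^ 2 = 1/c - 1\<close> by simp
  hence "1 / (1 + C t ^ 2) = C c" using C_inv[of "1/c"] by simp
  thus ?thesis using D_gen[of "C t"] by simp
qed

lemma D_C: "C r \<in> D"
proof -
  have r: "r = of_int \<lfloor>r\<rfloor> + (r - of_int \<lfloor>r\<rfloor>)" by simp
  have i: "C (of_int \<lfloor>r\<rfloor>) \<in> D" by (simp add: C_of_int min_dress_ring.int_in)
  have f: "C (r - of_int \<lfloor>r\<rfloor>) \<in> D"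
  proof (cases "r - of_int \<lfloor>r\<rfloor> = 0")
    case True thus ?thesis by (simp add: C_0 D_0)
  next
    case False
    have "0 < r - of_int \<lfloor>r\<rfloor>" "r - of_int \<lfloor>r\<rfloor> \<le> 1" using False by linarith+
    thus ?thesis by (intro D_C_unit)
  qed
  have "C r = C (of_int \<lfloor>r\<rfloor>) + C (r - of_int \<lfloor>r\<rfloor>)" by (simp flip: C_add)
  thus ?thesis using i f min_dress_ring.add_in by metis
qed

lemma one_plus_sq_nz: "1 + h ^ 2 \<noteq> (0::ratfun)"
proof
  assume a: "1 + h ^ 2 = 0"
  obtain p q where h: "h = Fract p q" "q \<noteq> 0" by (cases h)
  have "h ^ 2 = - 1" using a by (simp add: add_eq_0_iff)
  hence "Fract (p * p) (q * q) = Fract (- 1) 1" using h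
    by (simp add: power2_eq_square One_fract_def)
  hence e: "p * p = - (q * q)" using h by (simp add: eq_fract)
  obtain x where x: "poly q x \<noteq> 0" using h(2) poly_all_0_iff_0 by blast
  have "poly p x * poly p x = - (poly q x * poly q x)" using arg_cong[OF e, of "\<lambda>r. poly r x"] by simp
  moreover have "poly q x * poly q x > 0" using x by (metis linorder_neqE_linordered_idom mult_neg_neg mult_pos_pos)
  moreover have "poly p x * poly p x \<ge> 0" by simp
  ultimately show False by linarith
qed

lemma D_gen2: "h / (1 + h ^ 2) \<in> D"
proof (cases "h = 1")
  case True thus ?thesis using D_gen[of 1] by simp
next
  case False
  define k where "k = (1 + h) / (1 - h)"
  have nz1: "1 - h \<noteq> 0" using False by simp
  have nz2: "1 + h^2 \<noteq> 0" "1 + k^2 \<noteq> 0" by (rule one_plus_sq_nz)+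
  have "1 / (1 + k ^ 2) = 1 / (1 + 1 ^ 2) - h / (1 + h ^ 2)"
    using nz1 nz2 unfolding k_def by (simp add: field_simps) (simp add: algebra_simps power2_eq_square)
  hence "h / (1 + h ^ 2) = 1 / (1 + 1 ^ 2) - 1 / (1 + k ^ 2)" by simp
  thus ?thesis using D_gen D_diff by metis
qed

lemma D_add: "a \<in> D \<Longrightarrow> b \<in> D \<Longrightarrow> a + b \<in> D" by (rule min_dress_ring.add_in)
lemma D_mult: "a \<in> D \<Longrightarrow> b \<in> D \<Longrightarrow> a * b \<in> D" by (rule min_dress_ring.mult_in)

lemma D_quad:
  fixes a b :: real
  assumes b: "b \<noteq> 0" and s: "degree s \<le> 2"
  defines "q \<equiv> [:a^2+b^2, -2*a, 1:]"
  shows "E s / E q \<in> D"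
proof -
  define r where "r = [:-a/b, 1/b:]"
  define h where "h = E r"
  have q0: "q \<noteq> 0" unfolding q_def by simp
  hence Eq0: "E q \<noteq> 0" by (simp add: E_eq_0)
  have pid: "1 + r ^ 2 = smult (1/b^2) q"
    by (rule poly_eq_poly_eq_iff[THEN iffD1], rule ext)
       (simp add: r_def q_def field_simps power2_eq_square b)
  have "1 + h ^ 2 = E (1 + r ^ 2)" by (simp add: h_def E_add E_mult E_1 power2_eq_square)
  also have "\<dots> = C (1/b^2) * E q" by (simp only: pid E_smult)
  finally have hh: "1 + h ^ 2 = C (1/b^2) * E q" .
  hence hq: "1 / (1 + h ^ 2) = 1 / (C (1/b^2) * E q)" "h / (1 + h ^ 2) = h / (C (1/b^2) * E q)" by simp_all
  have cnz: "C (1/b^2) \<noteq> 0" using b by (simp add: C_eq_0)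
  have G1: "1 / E q \<in> D"
  proof -
    have "1 / E q = C (1/b^2) * (1 / (1 + h ^ 2))" using hq cnz by simp
    thus ?thesis using D_mult[OF D_C D_gen] by simp
  qed
  have XD: "E [:0,1:] / E q \<in> D"
  proof -
    have pid2: "[:0,1:] = smult b r + [:a:]" unfolding r_def using b by simp
    have rq: "E r / E q = C (1/b^2) * (h / (1 + h ^ 2))" by (subst hh) (use cnz in \<open>simp add: h_def\<close>)
    have "E [:0,1:] / E q = (C b * E r + C a) / E q" by (simp add: pid2 E_add E_smult C_def)
    also have "\<dots> = C b * (E r / E q) + C a * (1 / E q)" by (simp only: add_divide_distrib times_divide_eq_right mult_1_right)
    finally have "E [:0,1:] / E q = C b * (C (1/b^2) * (h / (1 + h ^ 2))) + C a * (1 / E q)" by (simp only: rq)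
    thus ?thesis using D_mult D_add D_C D_gen2 G1 by metis
  qed
  have X2D: "E [:0,0,1:] / E q \<in> D"
  proof -
    have pid3: "[:0,0,1:] = q - [:a^2+b^2:] - smult (-2*a) [:0,1:]" unfolding q_def by simp
    have "E [:0,0,1:] = E q - C (a^2+b^2) - C (-2*a) * E [:0,1:]"
      by (simp only: pid3 E_diff E_smult C_def)
    hence "E [:0,0,1:] / E q = E q / E q - C (a^2+b^2) * (1 / E q) - C (-2*a) * (E [:0,1:] / E q)"
      by (simp add: diff_divide_distrib)
    hence "E [:0,0,1:] / E q = 1 - C (a^2+b^2) * (1 / E q) - C (-2*a) * (E [:0,1:] / E q)"
      using Eq0 by simp
    thus ?thesis using D_mult D_diff D_C G1 XD D_1 by metis
  qed
  have sid: "s = [:coeff s 0:] + smult (coeff s 1) [:0,1:] + smult (coeff s 2) [:0,0,1:]"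
  proof (rule poly_eqI)
    fix n show "coeff s n = coeff ([:coeff s 0:] + smult (coeff s 1) [:0,1:] + smult (coeff s 2) [:0,0,1:]) n"
    proof (cases "n \<le> 2")
      case True
      then consider "n = 0" | "n = 1" | "n = 2" by linarith
      thus ?thesis
      proof cases
        case 3
        hence n2: "n = Suc (Suc 0)" by simp
        show ?thesis unfolding n2 by simp (simp only: numeral_2_eq_2)
      qed simp_all
    next
      case False
      hence "coeff s n = 0" using s by (intro coeff_eq_0) simp
      moreover obtain k where n: "n = Suc (Suc (Suc k))" using False
        by (metis add_Suc_right add_Suc_shift add_diff_cancel_left' le_add_diff_inverse nat_le_linear numeral_3_eq_3 not_less_eq_eq numeral_2_eq_2)
      ultimately show ?thesis unfolding n by simp
    qed
  qed
  have "E s / E q = C (coeff s 0) * (1 / E q) + C (coeff s 1) * (E [:0,1:] / E q) + C (coeff s 2) * (E [:0,0,1:] / E q)"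
  proof -
    have "E s = C (coeff s 0) + C (coeff s 1) * E [:0,1:] + C (coeff s 2) * E [:0,0,1:]"
      by (subst sid) (simp only: E_add E_smult C_def)
    thus ?thesis by (simp only: add_divide_distrib times_divide_eq_right mult_1_right)
  qed
  thus ?thesis using D_mult D_add D_C G1 XD X2D by metis
qed

definition R :: "real poly \<Rightarrow> complex poly" where "R p = map_poly complex_of_real p"

lemma R_0: "R 0 = 0" by (simp add: R_def)
lemma R_pCons: "R (pCons a p) = pCons (of_real a) (R p)"
  by (simp add: R_def map_poly_pCons)
lemma R_add: "R (p + q) = R p + R q"
  by (intro poly_eqI) (simp add: R_def coeff_map_poly)
lemma R_smult: "R (smult a q) = smult (of_real a) (R q)"
  by (simp add: R_def map_poly_smult)
lemma poly_R_mult: "poly (R (p * q)) z = poly (R p) z * poly (R q) z"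
proof (induction p)
  case 0 thus ?case by (simp add: R_def)
next
  case (pCons a p)
  have "R (pCons a p * q) = smult (of_real a) (R q) + pCons 0 (R (p * q))"
    by (simp add: R_add R_smult R_pCons flip: R_pCons[of 0, simplified])
  thus ?case using pCons by (simp add: R_pCons algebra_simps)
qed
lemma poly_R_real: "poly (R p) (of_real x) = of_real (poly p x)"
  by (induction p) (simp_all add: R_pCons R_0)
lemma degree_R: "degree (R p) = degree p"
  by (simp add: R_def degree_map_poly)

lemma quad_factor:
  assumes g: "g \<in> Gamma" and dg: "degree g > 0"
  shows "\<exists>a b s. b \<noteq> (0::real) \<and> g = [:a^2+b^2, -2*a, 1:] * s"
proof -
  have "\<not> (\<exists>c l. c \<noteq> 0 \<and> l = 0 \<and> R g = pCons c l)"
  proof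
    assume "\<exists>c l. c \<noteq> 0 \<and> l = 0 \<and> R g = pCons c l"
    then obtain c where "R g = [:c:]" by blast
    hence "degree (R g) = 0" by simp
    thus False using dg by (simp add: degree_R)
  qed
  then obtain z where z: "poly (R g) z = 0" using fundamental_theorem_of_algebra_alt by blast
  define a where "a = Re z"
  define b where "b = Im z"
  have zab: "z = Complex a b" unfolding a_def b_def by simp
  have b0: "b \<noteq> 0"
  proof
    assume "b = 0"
    hence "z = of_real a" using zab by (simp add: complex_eq_iff)
    hence "of_real (poly g a) = (0::complex)" using z by (simp add: poly_R_real)
    thus False using g by (simp add: Gamma_def)
  qed
  define q where "q = [:a^2+b^2, -2*a, 1:]"
  have q0: "q \<noteq> 0" unfolding q_def by simp
  have qz: "poly (R q) z = 0"
    unfolding q_def zab by (simp add: R_pCons R_0 complex_eq_iff power2_eq_square algebra_simps)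
  define r where "r = g mod q"
  define s where "s = g div q"
  have gsr: "g = s * q + r" unfolding r_def s_def by simp
  have rz: "poly (R r) z = 0"
    using z qz by (subst (asm) gsr) (simp add: R_add poly_R_mult)
  have r0: "r = 0"
  proof (rule ccontr)
    assume rn: "r \<noteq> 0"
    hence "degree r < 2" using degree_mod_less[OF q0, of g] unfolding r_def q_def by simp
    hence rr: "r = [:coeff r 0, coeff r 1:]"
      by (intro poly_eqI) (auto simp: coeff_pCons coeff_eq_0 split: nat.split)
    have "poly (R [:coeff r 0, coeff r 1:]) z = 0" using rz rr by simp
    hence "coeff r 0 = 0 \<and> coeff r 1 = 0"
      unfolding zab using b0 by (simp add: R_pCons R_0 complex_eq_iff) (metis add_0_right mult_zero_right One_nat_def)
    hence "r = 0" by (subst rr) simp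
    thus False using rn by simp
  qed
  show ?thesis using b0 gsr r0 unfolding q_def by (metis add_0_right mult.commute)
qed

lemma supset_main:
  assumes "g \<in> Gamma" "degree f \<le> degree g"
  shows "Fract f g \<in> D"
  using assms
proof (induction "degree g" arbitrary: f g rule: less_induct)
  case less
  have g0: "g \<noteq> 0" and gp: "\<And>x. poly g x \<noteq> 0" using less.prems(1) by (auto simp: Gamma_def)
  show ?case
  proof (cases "degree g = 0")
    case True
    obtain d where d: "g = [:d:]" using True by (metis degree_eq_zeroE)
    obtain c where c: "f = [:c:]" using True less.prems(2) by (metis degree_eq_zeroE le_zero_eq)
    have "Fract f g = C c / C d" using g0 unfolding c d by (simp add: Fract_E C_def)
    also have "\<dots> = C c * C (1/d)" by (simp only: C_inv) simp
    also have "\<dots> = C (c * (1/d))" by (simp only: C_mult)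
    finally show ?thesis using D_C by simp
  next
    case False
    then obtain a b s where b: "b \<noteq> 0" and gqs: "g = [:a^2+b^2, -2*a, 1:] * s"
      using quad_factor[OF less.prems(1)] by auto
    define q where "q = [:a^2+b^2, -2*a, 1:]"
    have gqs': "g = q * s" using gqs q_def by simp
    have q0: "q \<noteq> 0" and dq: "degree q = 2" unfolding q_def by simp_all
    have s0: "s \<noteq> 0" using g0 gqs' by auto
    have sG: "s \<in> Gamma" using gp s0 unfolding gqs' Gamma_def by auto
    have dg: "degree g = 2 + degree s" using gqs' q0 s0 dq by (simp add: degree_mult_eq)
    define t where "t = f div s"
    define r where "r = f mod s"
    have ftr: "f = t * s + r" unfolding t_def r_def by simp
    have dr: "degree r \<le> degree s" using degree_mod_less[OF s0, of f] unfolding r_def by auto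
    have dt: "degree t \<le> 2"
    proof (cases "t = 0")
      case True thus ?thesis by simp
    next
      case False
      have "degree t + degree s = degree (f - r)" using ftr False s0 by (simp add: degree_mult_eq)
      also have "\<dots> \<le> max (degree f) (degree r)" by (rule degree_diff_le_max)
      also have "\<dots> \<le> 2 + degree s" using less.prems(2) dr dg by simp
      finally show ?thesis by simp
    qed
    have IH: "Fract r s \<in> D" using less.hyps[of s r] dg sG dr by simp
    have Es0: "E s \<noteq> 0" using s0 by (simp add: E_eq_0)
    have "Fract f g = (E t * E s + E r) / (E q * E s)"
      using g0 unfolding gqs' by (simp add: Fract_E ftr E_add E_mult)
    also have "\<dots> = E t / E q + (E r / E s) * (E 1 / E q)"
      using Es0 by (simp add: E_1 add_divide_distrib)
    finally have eq: "Fract f g = E t / E q + Fract r s * (E 1 / E q)" using s0 by (simp add: Fract_E)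
    have "E t / E q \<in> D" "E 1 / E q \<in> D" unfolding q_def using D_quad[OF b] dt by auto
    thus ?thesis unfolding eq using IH D_add D_mult by blast
  qed
qed

lemma Gamma_mult: "g1 \<in> Gamma \<Longrightarrow> g2 \<in> Gamma \<Longrightarrow> g1 * g2 \<in> Gamma"
  by (auto simp: Gamma_def)
lemma Gamma_1: "1 \<in> Gamma" by (simp add: Gamma_def)

lemma deg_sq:
  fixes p q :: "real poly"
  assumes q0: "q \<noteq> 0"
  shows "degree (q * q) \<le> degree (q * q + p * p)"
proof (cases "p = 0")
  case True thus ?thesis by simp
next
  case p0: False
  have dqq: "degree (q * q) = degree q + degree q" using q0 by (simp add: degree_mult_eq)
  have dpp: "degree (p * p) = degree p + degree p" using p0 by (simp add: degree_mult_eq)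
  have lq: "lead_coeff q * lead_coeff q > 0" using q0
    by (metis leading_coeff_0_iff linorder_neqE_linordered_idom mult_neg_neg mult_pos_pos)
  have lp: "lead_coeff p * lead_coeff p > 0" using p0
    by (metis leading_coeff_0_iff linorder_neqE_linordered_idom mult_neg_neg mult_pos_pos)
  have cqq: "coeff (q * q) (degree q + degree q) = lead_coeff q * lead_coeff q"
    by (rule coeff_mult_degree_sum)
  have cpp: "coeff (p * p) (degree p + degree p) = lead_coeff p * lead_coeff p"
    by (rule coeff_mult_degree_sum)
  consider "degree p < degree q" | "degree p = degree q" | "degree p > degree q" by linarith
  thus ?thesis
  proof cases
    case 1
    have "coeff (p * p) (degree q + degree q) = 0" using 1 dpp by (intro coeff_eq_0) simp
    hence "coeff (q * q + p * p) (degree q + degree q) \<noteq> 0" using cqq lq q0 by simp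
    thus ?thesis using dqq le_degree by metis
  next
    case 2
    hence "coeff (q * q + p * p) (degree q + degree q) \<noteq> 0" using cqq cpp lq lp q0 by simp
    thus ?thesis using dqq le_degree by metis
  next
    case 3
    have "coeff (q * q) (degree p + degree p) = 0" using 3 dqq by (intro coeff_eq_0) simp
    hence "coeff (q * q + p * p) (degree p + degree p) \<noteq> 0" using cpp lp p0 by simp
    hence "degree p + degree p \<le> degree (q * q + p * p)" by (rule le_degree)
    thus ?thesis using dqq 3 by simp
  qed
qed

lemma sq_sum_Gamma:
  fixes p q :: "real poly"
  assumes cop: "coprime p q" and q0: "q \<noteq> 0"
  shows "q * q + p * p \<in> Gamma"
proof -
  have "poly (q * q + p * p) x \<noteq> 0" for x
  proof
    assume "poly (q * q + p * p) x = 0"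
    hence "poly q x * poly q x + poly p x * poly p x = 0" by simp
    hence "poly q x * poly q x = 0" "poly p x * poly p x = 0"
      using zero_le_square[of "poly q x"] zero_le_square[of "poly p x"] by linarith+
    hence "poly q x = 0" "poly p x = 0" by simp_all
    hence "[:-x, 1:] dvd q" "[:-x, 1:] dvd p" by (simp_all add: poly_eq_0_iff_dvd)
    hence "is_unit [:-x, 1:]" using cop coprime_common_divisor by blast
    thus False by (simp add: is_unit_iff_degree)
  qed
  moreover have "q * q + p * p \<noteq> 0"
    using calculation[of 0] by auto
  ultimately show ?thesis by (simp add: Gamma_def)
qed

definition S :: "ratfun set" where
  "S = {Fract f g | f g. g \<in> Gamma \<and> degree f \<le> degree g}"

lemma S_gen: "1 / (1 + h ^ 2) \<in> S"
proof -
  obtain p q where h: "h = Fract p q" "q \<noteq> 0" by (cases h)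
  define d where "d = gcd p q"
  have d0: "d \<noteq> 0" using h(2) unfolding d_def by simp
  define p' where "p' = p div d"
  define q' where "q' = q div d"
  have cop: "coprime p' q'" unfolding p'_def q'_def d_def using h(2) by (intro div_gcd_coprime) simp
  have pp: "p = d * p'" and qq: "q = d * q'" unfolding p'_def q'_def d_def by simp_all
  have q'0: "q' \<noteq> 0" using h(2) qq by auto
  have hh: "h = Fract p' q'" using h d0 unfolding pp qq by (simp add: mult_fract_cancel)
  have "1 + h ^ 2 = Fract (q' * q' + p' * p') (q' * q')"
    using q'0 unfolding hh by (simp add: power2_eq_square One_fract_def algebra_simps)
  hence "1 / (1 + h ^ 2) = Fract (q' * q') (q' * q' + p' * p')"
    by (simp add: divide_inverse)
  moreover have "q' * q' + p' * p' \<in> Gamma" by (rule sq_sum_Gamma[OF cop q'0])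
  moreover have "degree (q' * q') \<le> degree (q' * q' + p' * p')" by (rule deg_sq[OF q'0])
  ultimately show ?thesis unfolding S_def by blast
qed

lemma subset_S: "x \<in> D \<Longrightarrow> x \<in> S"
proof (induction rule: min_dress_ring.induct)
  case (int_in n)
  have "(of_int n :: ratfun) = Fract [:(of_int n :: real):] 1" using C_of_int[of n] by (simp add: C_def E_def)
  thus ?case unfolding S_def using Gamma_1 by fastforce
next
  case (gen_in h) thus ?case by (rule S_gen)
next
  case (add_in a b)
  then obtain f1 g1 f2 g2 where a: "a = Fract f1 g1" "g1 \<in> Gamma" "degree f1 \<le> degree g1"
    and b: "b = Fract f2 g2" "g2 \<in> Gamma" "degree f2 \<le> degree g2" unfolding S_def by blast
  have nz: "g1 \<noteq> 0" "g2 \<noteq> 0" using a b by (auto simp: Gamma_def)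
  have "a + b = Fract (f1 * g2 + f2 * g1) (g1 * g2)" using a b nz by simp
  moreover have "g1 * g2 \<in> Gamma" using a b Gamma_mult by blast
  moreover have "degree (f1 * g2 + f2 * g1) \<le> degree (g1 * g2)"
  proof -
    have "degree (f1 * g2) \<le> degree g1 + degree g2" using degree_mult_le[of f1 g2] a by simp
    moreover have "degree (f2 * g1) \<le> degree g1 + degree g2" using degree_mult_le[of f2 g1] b by simp
    ultimately have "degree (f1 * g2 + f2 * g1) \<le> degree g1 + degree g2"
      using degree_add_le by blast
    thus ?thesis using nz by (simp add: degree_mult_eq)
  qed
  ultimately show ?case unfolding S_def by blast
next
  case (neg_in a)
  then obtain f g where a: "a = Fract f g" "g \<in> Gamma" "degree f \<le> degree g" unfolding S_def by blast
  have "- a = Fract (- f) g" using a by simp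
  thus ?case using a unfolding S_def by fastforce
next
  case (mult_in a b)
  then obtain f1 g1 f2 g2 where a: "a = Fract f1 g1" "g1 \<in> Gamma" "degree f1 \<le> degree g1"
    and b: "b = Fract f2 g2" "g2 \<in> Gamma" "degree f2 \<le> degree g2" unfolding S_def by blast
  have nz: "g1 \<noteq> 0" "g2 \<noteq> 0" using a b by (auto simp: Gamma_def)
  have "a * b = Fract (f1 * f2) (g1 * g2)" using a b by simp
  moreover have "g1 * g2 \<in> Gamma" using a b Gamma_mult by blast
  moreover have "degree (f1 * f2) \<le> degree (g1 * g2)"
    using degree_mult_le[of f1 f2] a b nz by (simp add: degree_mult_eq)
  ultimately show ?case unfolding S_def by blast
qed

theorem proposition2p1:
  shows "min_dress_ring = {Fract f g | f g. g \<in> Gamma \<and> degree f \<le> degree g}"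
proof
  show "min_dress_ring \<subseteq> {Fract f g | f g. g \<in> Gamma \<and> degree f \<le> degree g}"
    using subset_S unfolding S_def by blast
  show "{Fract f g | f g. g \<in> Gamma \<and> degree f \<le> degree g} \<subseteq> min_dress_ring"
    using supset_main by blast
qed

end
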